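(* Let $(y_i)_{i\in\mathbb{Z}}$ be independent indeterminates. Define rational functions $y_i^{(j)}$ for $i\in\mathbb{Z}$, $j\ge -1$ by $y_i^{(-1)}=y_i^{(0)}=y_i$ and, for $j\ge1$, $$y_i^{(j)}=\frac{y_{i-1}^{(j-1)}\,y_{i+1}^{(j-1)}+1}{y_i^{(j-2)}}.$$ Then for all $i\in\mathbb{Z}$ and $j\ge1$, $$y_i^{(j)}=\frac{P(\tilde T_{i-j+1}\cup\tilde T_{i-j+2}\cup\dots\cup\tilde T_{i+j-1})}{y_{i-j+1}y_{i-j+2}\cdots y_{i+j-1}},$$ where $\tilde T_{i-j+1}\cup\dots\cup\tilde T_{i+j-1}$ denotes the ladder graph of the $2j-1$ tiles $\tilde T_{i-j+1},\dots,\tilde T_{i+j-1}$ in this order.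
   Context: For $k\in\mathbb{Z}$, the tile $\tilde T_k$ is a square whose northern edge has weight $y_{k+1}$, southern edge weight $y_{k-1}$, and eastern and western edges weight $1$. The ladder graph of a tile sequence $S_1,\dots,S_m$ (tile $S_k$ with north weight $a_k$, south weight $b_k$) is the graph obtained by gluing the squares in a row (east edge of $S_k$ identified with west edge of $S_{k+1}$): vertices $u_0,\dots,u_m,v_0,\dots,v_m$, edges $u_{k-1}u_k$ of weight $a_k$, $v_{k-1}v_k$ of weight $b_k$ ($1\le k\le m$), and $u_kv_k$ of weight $1$ ($0\le k\le m$). For a weighted graph $G$, $P(G)=\sum_M\prod_{e\in M}w_e$, summed over all perfect matchings $M$ of $G$. *)

theory Defs
  imports Main
begin

definition perfect_matchings :: "'v set \<Rightarrow> 'e set \<Rightarrow> ('e \<Rightarrow> 'v set) \<Rightarrow> 'e set set" where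
  "perfect_matchings V E ends = {M. M \<subseteq> E \<and> (\<forall>v\<in>V. \<exists>!e. e \<in> M \<and> v \<in> ends e)}"

definition matching_sum :: "'v set \<Rightarrow> 'e set \<Rightarrow> ('e \<Rightarrow> 'v set) \<Rightarrow> ('e \<Rightarrow> 'a::comm_semiring_1) \<Rightarrow> 'a" where
  "matching_sum V E ends w = (\<Sum>M\<in>perfect_matchings V E ends. \<Prod>e\<in>M. w e)"

datatype lvert = U nat | V nat
datatype ledge = Top nat | Bot nat | Rung nat

definition ladder_verts :: "nat \<Rightarrow> lvert set" where
  "ladder_verts m = U ` {0..m} \<union> V ` {0..m}"

definition ladder_edges :: "nat \<Rightarrow> ledge set" where
  "ladder_edges m = Top ` {1..m} \<union> Bot ` {1..m} \<union> Rung ` {0..m}"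

fun ladder_ends :: "ledge \<Rightarrow> lvert set" where
  "ladder_ends (Top k) = {U (k - 1), U k}"
| "ladder_ends (Bot k) = {V (k - 1), V k}"
| "ladder_ends (Rung k) = {U k, V k}"

fun ladder_weight :: "(nat \<Rightarrow> 'a) \<Rightarrow> (nat \<Rightarrow> 'a) \<Rightarrow> ledge \<Rightarrow> 'a::one" where
  "ladder_weight a b (Top k) = a k"
| "ladder_weight a b (Bot k) = b k"
| "ladder_weight a b (Rung k) = 1"

text \<open>P of the ladder graph of tiles S_1..S_m, with S_k having north weight a k and
  south weight b k.\<close>
definition ladder_P :: "nat \<Rightarrow> (nat \<Rightarrow> 'a::comm_semiring_1) \<Rightarrow> (nat \<Rightarrow> 'a) \<Rightarrow> 'a" where
  "ladder_P m a b = matching_sum (ladder_verts m) (ladder_edges m) ladder_ends (ladder_weight a b)"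

text \<open>ysh y i n = y_i^{(n-1)}, i.e. the superscript is shifted by one so that it is a nat.\<close>
fun ysh :: "(int \<Rightarrow> 'a::field) \<Rightarrow> int \<Rightarrow> nat \<Rightarrow> 'a" where
  "ysh y i 0 = y i"
| "ysh y i (Suc 0) = y i"
| "ysh y i (Suc (Suc n)) = (ysh y (i - 1) (Suc n) * ysh y (i + 1) (Suc n) + 1) / ysh y i n"

end

theory Submission imports Defs begin

lemma pm_split:
  assumes fin: "finite E" and v: "v \<in> Vs" and sub: "\<forall>e\<in>E. ends e \<subseteq> Vs"
  shows "matching_sum Vs E ends w =
    (\<Sum>e\<in>{e\<in>E. v \<in> ends e}. w e * matching_sum (Vs - ends e) {f\<in>E. ends f \<inter> ends e = {}} ends w)"
proof -
  define S where "S = {e\<in>E. v \<in> ends e}"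
  define E' where "E' e = {f\<in>E. ends f \<inter> ends e = {}}" for e
  define P where "P e = perfect_matchings (Vs - ends e) (E' e) ends" for e
  have sup: "insert e M \<in> perfect_matchings Vs E ends" if "e \<in> S" "M \<in> P e" for e M
  proof -
    have M: "M \<subseteq> E' e" "\<forall>u\<in>Vs - ends e. \<exists>!f. f \<in> M \<and> u \<in> ends f"
      using that(2) by (auto simp: P_def perfect_matchings_def)
    have "e \<in> E" using that(1) by (auto simp: S_def)
    moreover have "\<exists>!f. f \<in> insert e M \<and> u \<in> ends f" if u: "u \<in> Vs" for u
    proof (cases "u \<in> ends e")
      case True
      then show ?thesis using M(1) by (auto simp: E'_def)
    next
      case False
      then have "u \<in> Vs - ends e" using u by auto
      then show ?thesis using M(2) False by (metis insert_iff)
    qed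
    ultimately show ?thesis using M(1) by (auto simp: perfect_matchings_def E'_def)
  qed
  have eq: "perfect_matchings Vs E ends = (\<Union>e\<in>S. insert e ` P e)"
  proof
    show "perfect_matchings Vs E ends \<subseteq> (\<Union>e\<in>S. insert e ` P e)"
    proof
      fix M assume M: "M \<in> perfect_matchings Vs E ends"
      then have ME: "M \<subseteq> E" and cov: "\<forall>u\<in>Vs. \<exists>!f. f \<in> M \<and> u \<in> ends f"
        by (auto simp: perfect_matchings_def)
      obtain e where e: "e \<in> M" "v \<in> ends e" using cov v by blast
      have "M - {e} \<subseteq> E' e"
      proof
        fix f assume f: "f \<in> M - {e}"
        have "ends f \<inter> ends e = {}"
        proof (rule ccontr)
          assume "ends f \<inter> ends e \<noteq> {}"
          then obtain u where u: "u \<in> ends f" "u \<in> ends e" by auto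
          have "u \<in> Vs" using u(2) e(1) ME sub by auto
          then show False using cov u f e(1) by blast
        qed
        then show "f \<in> E' e" using f ME by (auto simp: E'_def)
      qed
      moreover have "\<forall>u\<in>Vs - ends e. \<exists>!f. f \<in> M - {e} \<and> u \<in> ends f"
      proof
        fix u assume u: "u \<in> Vs - ends e"
        then obtain f where f: "f \<in> M" "u \<in> ends f" "\<forall>g. g \<in> M \<and> u \<in> ends g \<longrightarrow> g = f"
          using cov by blast
        then show "\<exists>!f. f \<in> M - {e} \<and> u \<in> ends f" using u by blast
      qed
      ultimately have "M - {e} \<in> P e" by (auto simp: P_def perfect_matchings_def)
      moreover have "e \<in> S" using e ME by (auto simp: S_def)
      moreover have "M = insert e (M - {e})" using e by auto
      ultimately show "M \<in> (\<Union>e\<in>S. insert e ` P e)" by blast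
    qed
  next
    show "(\<Union>e\<in>S. insert e ` P e) \<subseteq> perfect_matchings Vs E ends" using sup by blast
  qed
  have finS: "finite S" using fin by (auto simp: S_def)
  have PE: "P e \<subseteq> Pow E" for e by (auto simp: P_def perfect_matchings_def E'_def)
  have finP: "finite (P e)" for e using PE fin by (meson finite_Pow_iff finite_subset)
  have notin: "e \<notin> M" if "e \<in> S" "M \<in> P e" for e M
    using that by (auto simp: P_def perfect_matchings_def E'_def S_def)
  have disj: "\<forall>i\<in>S. \<forall>j\<in>S. i \<noteq> j \<longrightarrow> insert i ` P i \<inter> insert j ` P j = {}"
  proof (intro ballI impI)
    fix i j assume ij: "i \<in> S" "j \<in> S" "i \<noteq> j"
    show "insert i ` P i \<inter> insert j ` P j = {}"
    proof (rule ccontr)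
      assume "insert i ` P i \<inter> insert j ` P j \<noteq> {}"
      then obtain X where X: "X \<in> insert i ` P i" "X \<in> insert j ` P j" by blast
      then have "X \<in> perfect_matchings Vs E ends" using ij sup by blast
      then have "\<exists>!f. f \<in> X \<and> v \<in> ends f" using v by (auto simp: perfect_matchings_def)
      moreover have "i \<in> X" "j \<in> X" using X by auto
      moreover have "v \<in> ends i" "v \<in> ends j" using ij by (auto simp: S_def)
      ultimately show False using ij by blast
    qed
  qed
  have "matching_sum Vs E ends w = (\<Sum>e\<in>S. \<Sum>M\<in>insert e ` P e. \<Prod>x\<in>M. w x)"
    unfolding matching_sum_def eq
    by (rule sum.UNION_disjoint[OF finS]) (use finP disj in auto)
  also have "\<dots> = (\<Sum>e\<in>S. \<Sum>M\<in>P e. \<Prod>x\<in>insert e M. w x)"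
  proof (rule sum.cong[OF refl])
    fix e assume e: "e \<in> S"
    have "inj_on (insert e) (P e)"
      by (rule inj_onI) (metis e notin insert_ident)
    then show "(\<Sum>M\<in>insert e ` P e. \<Prod>x\<in>M. w x) = (\<Sum>M\<in>P e. \<Prod>x\<in>insert e M. w x)"
      by (simp add: sum.reindex)
  qed
  also have "\<dots> = (\<Sum>e\<in>S. w e * (\<Sum>M\<in>P e. \<Prod>x\<in>M. w x))"
  proof (rule sum.cong[OF refl])
    fix e assume e: "e \<in> S"
    have "(\<Prod>x\<in>insert e M. w x) = w e * (\<Prod>x\<in>M. w x)" if "M \<in> P e" for M
    proof -
      have "finite M" using that PE fin by (meson PowD finite_subset subsetD)
      then show ?thesis using notin[OF e that] by simp
    qed
    then show "(\<Sum>M\<in>P e. \<Prod>x\<in>insert e M. w x) = w e * (\<Sum>M\<in>P e. \<Prod>x\<in>M. w x)"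
      by (simp add: sum_distrib_left)
  qed
  finally show ?thesis by (simp add: S_def P_def E'_def matching_sum_def)
qed


lemma ladder_fin: "finite (ladder_edges m)" by (simp add: ladder_edges_def)
lemma ladder_sub: "\<forall>e\<in>ladder_edges m. ladder_ends e \<subseteq> ladder_verts m"
  by (auto simp: ladder_edges_def ladder_verts_def)

lemma ladder_P0: "ladder_P 0 a b = 1"
proof -
  have S: "{e \<in> ladder_edges 0. U 0 \<in> ladder_ends e} = {Rung 0}"
    by (auto simp: ladder_edges_def)
  have E: "{f \<in> ladder_edges 0. U 0 \<notin> ladder_ends f \<and> V 0 \<notin> ladder_ends f} = {}"
    by (auto simp: ladder_edges_def)
  have Vv: "ladder_verts 0 - {U 0, V 0} = {}"
    by (auto simp: ladder_verts_def)
  have "perfect_matchings {} {} ends = {{}}" for ends :: "ledge \<Rightarrow> lvert set"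
    by (auto simp: perfect_matchings_def)
  then have pe: "matching_sum {} {} ladder_ends (ladder_weight a b) = 1"
    by (simp add: matching_sum_def)
  have "ladder_P 0 a b = (\<Sum>e\<in>{e \<in> ladder_edges 0. U 0 \<in> ladder_ends e}. ladder_weight a b e *
     matching_sum (ladder_verts 0 - ladder_ends e) {f \<in> ladder_edges 0. ladder_ends f \<inter> ladder_ends e = {}} ladder_ends (ladder_weight a b))"
    unfolding ladder_P_def by (rule pm_split[OF ladder_fin _ ladder_sub]) (simp add: ladder_verts_def)
  also have "\<dots> = 1" by (simp add: S E Vv pe)
  finally show ?thesis .
qed

lemma E1: "{f \<in> ladder_edges (Suc n). U (Suc n) \<notin> ladder_ends f \<and> V (Suc n) \<notin> ladder_ends f} = ladder_edges n"
proof (rule set_eqI)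
  fix f show "f \<in> {f \<in> ladder_edges (Suc n). U (Suc n) \<notin> ladder_ends f \<and> V (Suc n) \<notin> ladder_ends f} \<longleftrightarrow> f \<in> ladder_edges n"
    by (cases f) (auto simp: ladder_edges_def image_iff)
qed

lemma V1: "ladder_verts (Suc n) - {U (Suc n), V (Suc n)} = ladder_verts n"
proof (rule set_eqI)
  fix x show "x \<in> ladder_verts (Suc n) - {U (Suc n), V (Suc n)} \<longleftrightarrow> x \<in> ladder_verts n"
    by (cases x) (auto simp: ladder_verts_def image_iff)
qed

lemma E2: "{f \<in> ladder_edges (Suc (Suc n)). U (Suc n) \<notin> ladder_ends f \<and> U (Suc (Suc n)) \<notin> ladder_ends f
   \<and> V (Suc n) \<notin> ladder_ends f \<and> V (Suc (Suc n)) \<notin> ladder_ends f} = ladder_edges n"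
proof (rule set_eqI)
  fix f show "f \<in> {f \<in> ladder_edges (Suc (Suc n)). U (Suc n) \<notin> ladder_ends f \<and> U (Suc (Suc n)) \<notin> ladder_ends f
   \<and> V (Suc n) \<notin> ladder_ends f \<and> V (Suc (Suc n)) \<notin> ladder_ends f} \<longleftrightarrow> f \<in> ladder_edges n"
    by (cases f) (auto simp: ladder_edges_def image_iff)
qed

lemma V2: "ladder_verts (Suc (Suc n)) - {U (Suc n), U (Suc (Suc n))} - {V (Suc n), V (Suc (Suc n))} = ladder_verts n"
proof (rule set_eqI)
  fix x show "x \<in> ladder_verts (Suc (Suc n)) - {U (Suc n), U (Suc (Suc n))} - {V (Suc n), V (Suc (Suc n))} \<longleftrightarrow> x \<in> ladder_verts n"
    by (cases x) (auto simp: ladder_verts_def image_iff)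
qed

lemma step: "ladder_P (Suc k) a b = ladder_P k a b + a (Suc k) * b (Suc k) *
   matching_sum (ladder_verts (Suc k) - {U k, U (Suc k)} - {V k, V (Suc k)})
     {f \<in> ladder_edges (Suc k). U k \<notin> ladder_ends f \<and> U (Suc k) \<notin> ladder_ends f
   \<and> V k \<notin> ladder_ends f \<and> V (Suc k) \<notin> ladder_ends f} ladder_ends (ladder_weight a b)"
proof -
  let ?w = "ladder_weight a b"
  have S: "{e \<in> ladder_edges (Suc k). U (Suc k) \<in> ladder_ends e} = {Rung (Suc k), Top (Suc k)}"
    by (auto simp: ladder_edges_def)
  define V' where "V' = ladder_verts (Suc k) - {U k, U (Suc k)}"
  define E' where "E' = {f \<in> ladder_edges (Suc k). ladder_ends f \<inter> {U k, U (Suc k)} = {}}"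
  have "ladder_P (Suc k) a b = (\<Sum>e\<in>{Rung (Suc k), Top (Suc k)}. ?w e * matching_sum (ladder_verts (Suc k) - ladder_ends e)
     {f \<in> ladder_edges (Suc k). ladder_ends f \<inter> ladder_ends e = {}} ladder_ends ?w)"
    unfolding ladder_P_def S[symmetric] by (rule pm_split[OF ladder_fin _ ladder_sub]) (simp add: ladder_verts_def)
  also have "\<dots> = ladder_P k a b + a (Suc k) * matching_sum V' E' ladder_ends ?w"
    unfolding V'_def E'_def by (simp add: V1 E1 ladder_P_def)
  finally have 1: "ladder_P (Suc k) a b = ladder_P k a b + a (Suc k) * matching_sum V' E' ladder_ends ?w" .
  have S2: "{e \<in> E'. V (Suc k) \<in> ladder_ends e} = {Bot (Suc k)}"
    by (auto simp: E'_def ladder_edges_def)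
  have "matching_sum V' E' ladder_ends ?w = (\<Sum>e\<in>{Bot (Suc k)}. ?w e * matching_sum (V' - ladder_ends e)
     {f \<in> E'. ladder_ends f \<inter> ladder_ends e = {}} ladder_ends ?w)"
    unfolding S2[symmetric]
    by (rule pm_split) (use ladder_sub[of "Suc k"] in \<open>auto simp: E'_def V'_def ladder_verts_def ladder_fin\<close>)
  also have "\<dots> = b (Suc k) * matching_sum (ladder_verts (Suc k) - {U k, U (Suc k)} - {V k, V (Suc k)})
     {f \<in> ladder_edges (Suc k). U k \<notin> ladder_ends f \<and> U (Suc k) \<notin> ladder_ends f
   \<and> V k \<notin> ladder_ends f \<and> V (Suc k) \<notin> ladder_ends f} ladder_ends ?w"
    unfolding V'_def E'_def by (simp add: conj_ac)
  finally show ?thesis using 1 by (simp add: mult.assoc)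
qed

lemma ladder_P1: "ladder_P (Suc 0) a b = 1 + a 1 * b 1"
proof -
  have Vv: "ladder_verts (Suc 0) - {U 0, U (Suc 0)} - {V 0, V (Suc 0)} = {}"
    by (auto simp: ladder_verts_def)
  have Ee: "{f \<in> ladder_edges (Suc 0). U 0 \<notin> ladder_ends f \<and> U (Suc 0) \<notin> ladder_ends f
   \<and> V 0 \<notin> ladder_ends f \<and> V (Suc 0) \<notin> ladder_ends f} = {}"
    by (auto simp: ladder_edges_def)
  have "perfect_matchings {} {} ends = {{}}" for ends :: "ledge \<Rightarrow> lvert set"
    by (auto simp: perfect_matchings_def)
  then have pe: "matching_sum {} {} ladder_ends (ladder_weight a b) = 1"
    by (simp add: matching_sum_def)
  show ?thesis using step[of 0 a b] by (simp only: Vv Ee pe ladder_P0) simp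
qed

lemma ladder_P2: "ladder_P (Suc (Suc n)) a b = ladder_P (Suc n) a b + a (Suc (Suc n)) * b (Suc (Suc n)) * ladder_P n a b"
  using step[of "Suc n" a b] by (simp only: V2 E2 ladder_P_def)

fun G :: "(int \<Rightarrow> 'a::field) \<Rightarrow> int \<Rightarrow> nat \<Rightarrow> 'a" where
  "G y a 0 = y (a - 1)"
| "G y a (Suc 0) = 0"
| "G y a (Suc (Suc n)) = (G y a (Suc n) + y (a + int n) * G y a n) / y (a + int n - 1)"

declare G.simps(3)[simp del]

lemma G2: assumes "\<And>k. y k \<noteq> 0" shows "G y a 2 = y a"
  using assms[of "a - 1"] by (simp add: numeral_eq_Suc G.simps(3))

lemma G3: assumes "\<And>k. y k \<noteq> 0" shows "G y a 3 = 1"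
  using assms[of "a - 1"] assms[of a] by (simp add: numeral_eq_Suc G.simps(3))

lemma cas1:
  assumes nz: "\<And>k. y k \<noteq> 0"
  shows "G y a (k+3) * G y (a+2) k - G y a (k+2) * G y (a+2) (k+1) = (-1)^k * y (a + int k + 1)"
proof (induction k)
  case 0
  show ?case using nz[of a] nz[of "a - 1"] nz[of "a + 1"] by (simp add: numeral_eq_Suc add.commute G.simps(3))
next
  case (Suc k)
  have i1: "Suc k + 3 = Suc (Suc (k+2))" "Suc (k+2) = k+3" "a + int (k+2) = a + int k + 2"
     "a + int (k+2) - 1 = a + int k + 1" "a + int k + 2 - 1 = a + int k + 1" by simp_all
  have e1: "G y a (Suc k + 3) = (G y a (k+3) + y (a + int k + 2) * G y a (k+2)) / y (a + int k + 1)"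
    using G.simps(3)[of y a "k+2"] unfolding i1 .
  have i2: "Suc k + 1 = Suc (Suc k)" "a + 2 + int k = a + int k + 2"
     "a + 2 + int k - 1 = a + int k + 1" "a + int k + 2 - 1 = a + int k + 1" "Suc k = k + 1" by simp_all
  have e2: "G y (a+2) (Suc k + 1) = (G y (a+2) (k+1) + y (a + int k + 2) * G y (a+2) k) / y (a + int k + 1)"
    using G.simps(3)[of y "a+2" k] unfolding i2(2-5) by (metis Suc_eq_plus1)
  have e3: "G y a (Suc k + 2) = G y a (k + 3)" "G y (a+2) (Suc k) = G y (a+2) (k+1)" by (simp_all add: numeral_eq_Suc)
  have nz1: "y (a + int k + 1) \<noteq> 0" by (rule nz)
  have alg: "((A3 + y2 * A2) / y1) * g1 - A3 * ((g1 + y2 * g0) / y1) = - y2 * ((A3 * g0 - A2 * g1) / y1)"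
    for A3 A2 g1 g0 y1 y2 :: 'a
    by (simp add: diff_divide_distrib add_divide_distrib algebra_simps)
  have i3: "a + int (Suc k) + 1 = a + int k + 2" by simp
  show ?case unfolding e1 e2 e3 alg Suc.IH i3 using nz1 by simp

qed

lemma cas2:
  assumes nz: "\<And>k. y k \<noteq> 0"
  shows "G y a (k+4) * G y (a+2) k - G y a (k+2) * G y (a+2) (k+2) = (-1)^k"
proof -
  have i1: "k + 4 = Suc (Suc (k+2))" "Suc (k+2) = k+3" "a + int (k+2) = a + int k + 2"
     "a + int (k+2) - 1 = a + int k + 1" "a + int k + 2 - 1 = a + int k + 1" by simp_all
  have e1: "G y a (k + 4) = (G y a (k+3) + y (a + int k + 2) * G y a (k+2)) / y (a + int k + 1)"
    using G.simps(3)[of y a "k+2"] unfolding i1 .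
  have i2: "k + 2 = Suc (Suc k)" "a + 2 + int k = a + int k + 2"
     "a + 2 + int k - 1 = a + int k + 1" "a + int k + 2 - 1 = a + int k + 1" "Suc k = k + 1" by simp_all
  have e2: "G y (a+2) (k + 2) = (G y (a+2) (k+1) + y (a + int k + 2) * G y (a+2) k) / y (a + int k + 1)"
    using G.simps(3)[of y "a+2" k] unfolding i2(2-5) by (metis Suc_eq_plus1 add_2_eq_Suc')
  have alg: "((A3 + y2 * A2) / y1) * g0 - A2 * ((g1 + y2 * g0) / y1) = (A3 * g0 - A2 * g1) / y1"
    for A3 A2 g1 g0 y1 y2 :: 'a
    by (simp add: diff_divide_distrib add_divide_distrib algebra_simps)
  show ?thesis unfolding e1 e2 alg cas1[OF nz] using nz[of "a + int k + 1"] by simp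
qed

lemma ysh_G:
  assumes nz: "\<And>i n. ysh y i n \<noteq> 0"
  shows "ysh y i n = G y (i - int n + 1) (2 * n)"
proof (induction n arbitrary: i rule: less_induct)
  case (less n)
  have ynz: "y k \<noteq> 0" for k using nz[of k 0] by simp
  show ?case
  proof (cases n)
    case 0 then show ?thesis by simp
  next
    case (Suc m)
    show ?thesis
    proof (cases m)
      case 0
      then show ?thesis using Suc G2[of y i, OF ynz] by simp
    next
      case (Suc p)
      have n: "n = Suc (Suc p)" using \<open>n = Suc m\<close> Suc by simp
      define a where "a = i - int p - 1"
      have h1: "ysh y (i - 1) (Suc p) = G y a (2*p + 2)"
        using less.IH[of "Suc p" "i - 1"] n by (simp add: a_def algebra_simps)
      have h2: "ysh y (i + 1) (Suc p) = G y (a+2) (2*p + 2)"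
        using less.IH[of "Suc p" "i + 1"] n by (simp add: a_def algebra_simps)
      have h3: "ysh y i p = G y (a+2) (2*p)"
        using less.IH[of p i] n by (simp add: a_def algebra_simps)
      have c: "G y a (2*p+4) * G y (a+2) (2*p) - G y a (2*p+2) * G y (a+2) (2*p+2) = 1"
        using cas2[of y a "2*p", OF ynz] by simp
      have nz3: "G y (a+2) (2*p) \<noteq> 0" using nz[of i p] h3 by simp
      have "ysh y i n = (G y a (2*p + 2) * G y (a+2) (2*p + 2) + 1) / G y (a+2) (2*p)"
        using n h1 h2 h3 by simp
      also have "\<dots> = G y a (2*p+4)" using c nz3 by (simp add: field_simps)
      also have "\<dots> = G y (i - int n + 1) (2 * n)"
      proof -
        have "i - int n + 1 = a" "2 * n = 2*p+4" using n by (simp_all add: a_def)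
        then show ?thesis by simp
      qed
      finally show ?thesis .
    qed
  qed
qed

lemma G_ladder:
  assumes nz: "\<And>k. y k \<noteq> 0"
  shows "G y a (m+3) * (\<Prod>k\<in>{1..m}. y (a + int k)) =
    ladder_P m (\<lambda>k. y (a + int k + 1)) (\<lambda>k. y (a + int k - 1))
   \<and> G y a (Suc m+3) * (\<Prod>k\<in>{1..Suc m}. y (a + int k)) =
    ladder_P (Suc m) (\<lambda>k. y (a + int k + 1)) (\<lambda>k. y (a + int k - 1))"
proof (induction m)
  case 0
  have "G y a 4 = (1 + y (a + 2) * y a) / y (a + 1)"
    using G3[of y a, OF nz] G2[of y a, OF nz] G.simps(3)[of y a 2]
    by (simp add: numeral_eq_Suc add.commute)
  then show ?case using G3[of y a, OF nz] nz[of "a+1"]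
    by (simp add: ladder_P0 ladder_P1 field_simps)
next
  case (Suc m)
  let ?A = "\<lambda>k. y (a + int k + 1)" and ?B = "\<lambda>k. y (a + int k - 1)"
  define D where "D m = (\<Prod>k\<in>{1..m}. y (a + int k))" for m
  have D1: "D (Suc n) = D n * y (a + int n + 1)" for n
    by (simp add: D_def prod.nat_ivl_Suc' add.commute add.left_commute)
  have i1: "Suc (Suc m) + 3 = Suc (Suc (m+3))" "Suc (m+3) = Suc m + 3" "a + int (m+3) = a + int m + 3"
     "a + int (m+3) - 1 = a + int m + 2" "a + int m + 3 - 1 = a + int m + 2" by simp_all
  have e: "G y a (Suc (Suc m) + 3) = (G y a (Suc m + 3) + y (a + int m + 3) * G y a (m+3)) / y (a + int m + 2)"
    using G.simps(3)[of y a "m+3"] unfolding i1(2-5) by (simp only: i1(1) add_Suc)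
  have IH1: "G y a (m+3) * D m = ladder_P m ?A ?B" and IH2: "G y a (Suc m+3) * D (Suc m) = ladder_P (Suc m) ?A ?B"
    using Suc.IH by (simp_all add: D_def)
  have nz2: "y (a + int m + 2) \<noteq> 0" by (rule nz)
  have "G y a (Suc (Suc m) + 3) * D (Suc (Suc m)) =
     G y a (Suc m + 3) * D (Suc m) + y (a + int m + 3) * y (a + int m + 1) * (G y a (m+3) * D m)"
  proof -
    have "D (Suc (Suc m)) = D m * y (a + int m + 1) * y (a + int m + 2)"
      using D1[of "Suc m"] D1[of m] by (simp add: algebra_simps)
    moreover have "D (Suc m) = D m * y (a + int m + 1)" by (rule D1)
    ultimately show ?thesis unfolding e using nz2 by (simp add: field_simps)
  qed
  also have "\<dots> = ladder_P (Suc (Suc m)) ?A ?B"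
    unfolding IH1 IH2 ladder_P2 by (simp add: algebra_simps)
  finally show ?case using IH2 by (simp add: D_def)
qed

theorem lemma2:
  fixes y :: "int \<Rightarrow> 'a::field"
  assumes nonzero: "\<And>i n. ysh y i n \<noteq> 0"
  assumes j: "j \<ge> (1::nat)"
  shows "ysh y i (j + 1) =
    ladder_P (2 * j - 1) (\<lambda>k. y (i - int j + int k + 1)) (\<lambda>k. y (i - int j + int k - 1))
    / (\<Prod>k\<in>{1..2 * j - 1}. y (i - int j + int k))"
proof -
  have ynz: "y k \<noteq> 0" for k using nonzero[of k 0] by simp
  have "ysh y i (j + 1) = G y (i - int j) (2 * j - 1 + 3)"
  proof -
    have "i - int (j+1) + 1 = i - int j" "2 * (j+1) = 2 * j - 1 + 3" using j by simp_all
    then show ?thesis using ysh_G[OF nonzero, of i "j+1"] by simp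
  qed
  moreover have "G y (i - int j) (2 * j - 1 + 3) * (\<Prod>k\<in>{1..2 * j - 1}. y (i - int j + int k)) =
    ladder_P (2 * j - 1) (\<lambda>k. y (i - int j + int k + 1)) (\<lambda>k. y (i - int j + int k - 1))"
    using G_ladder[of y "i - int j" "2*j-1", OF ynz] by blast
  moreover have "(\<Prod>k\<in>{1..2 * j - 1}. y (i - int j + int k)) \<noteq> 0"
    using ynz by (simp add: prod_zero_iff)
  ultimately show ?thesis by (simp add: field_simps)
qed

end
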